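(* For $\mu_y\in\mathbb{R}$ and $\sigma_y\in\mathbb{R}$, let $W(\mu_y,\sigma_y)$ denote the 1-Wasserstein distance $W_1(X_1,X_2)$ between independent univariate Gaussians $X_1\sim N(\mu_1,\sigma_1^2)$ and $X_2\sim N(\mu_2,\sigma_2^2)$ with $\mu_1-\mu_2=\mu_y$ and $\sigma_1-\sigma_2=\sigma_y$ (this depends only on $(\mu_y,\sigma_y)$). Then: (i) for fixed $\mu_y$, $W(\mu_y,\sigma_y)\to\lvert\mu_y\rvert=\lvert\mu_1-\mu_2\rvert$ as $\sigma_y\to 0$; (ii) for fixed $\sigma_y$, $W(\mu_y,\sigma_y)-\lvert\mu_y\rvert\to 0$ as $\mu_y\to+\infty$ or $\mu_y\to-\infty$; (iii) for fixed $\mu_y$, $W(\mu_y,\sigma_y)-\sqrt{\tfrac{2}{\pi}}\lvert\sigma_y\rvert\to 0$ as $\lvert\sigma_y\rvert\to\infty$; (iv) for fixed $\sigma_y\neq 0$, $W(\mu_y,\sigma_y)\to\sqrt{\tfrac{2}{\pi}}\lvert\sigma_y\rvert=\sqrt{\tfrac{2}{\pi}}\lvert\sigma_1-\sigma_2\rvert$ as $\mu_y\to 0$.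
   Context: For univariate random variables $X,Y$ with laws $\mu,\nu$, the 1-Wasserstein distance is $W_1(X,Y)=\inf_{\pi\in\Pi(\mu,\nu)}\int \lvert x-y\rvert\,d\pi(x,y)$, where $\Pi(\mu,\nu)$ is the set of couplings of $\mu$ and $\nu$. The paper phrases this as: $W_1$ converges asymptotically to the lower bound $\lvert\mu_1-\mu_2\rvert$ when $\sigma_y\to0$ or $\mu_y\to\pm\infty$, and to $\sqrt{2/\pi}\,\lvert\sigma_1-\sigma_2\rvert$ when $\sigma_y\to\infty$ or $\mu_y\to 0$. *)

theory Defs
  imports "HOL-Probability.Probability"
begin

definition gaussian :: "real \<Rightarrow> real \<Rightarrow> real measure" where
  "gaussian m s = density lborel (normal_density m s)"

definition couplings :: "real measure \<Rightarrow> real measure \<Rightarrow> (real \<times> real) measure set" where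
  "couplings \<mu> \<nu> = {\<pi>. sets \<pi> = sets (borel \<Otimes>\<^sub>M borel) \<and> prob_space \<pi> \<and>
      distr \<pi> borel fst = \<mu> \<and> distr \<pi> borel snd = \<nu>}"

definition wasserstein1 :: "real measure \<Rightarrow> real measure \<Rightarrow> real" where
  "wasserstein1 \<mu> \<nu> =
     enn2real (INF \<pi> \<in> couplings \<mu> \<nu>. \<integral>\<^sup>+ z. ennreal \<bar>fst z - snd z\<bar> \<partial>\<pi>)"

text \<open>W(mu_y, sigma_y): W1 between N(mu_1,sigma_1^2) and N(mu_2,sigma_2^2) for one
  canonical choice with mu_1 - mu_2 = mu_y, sigma_1 - sigma_2 = sigma_y, sigma_i > 0
  (mu_2 = 0, sigma_2 = 1 + |sigma_y|). Independence of this choice is part of the theorem.\<close>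
definition gaussW :: "real \<Rightarrow> real \<Rightarrow> real" where
  "gaussW my sy = wasserstein1 (gaussian my (1 + \<bar>sy\<bar> + sy)) (gaussian 0 (1 + \<bar>sy\<bar>))"

end

theory Submission
  imports Defs
begin


definition N :: "real measure" where "N = gaussian 0 1"

lemma prob_N: "prob_space N"
  unfolding N_def gaussian_def by (rule prob_space_normal_density) simp

lemma sets_N[measurable_cong, simp]: "sets N = sets borel"
  unfolding N_def gaussian_def by simp

lemma space_N[simp]: "space N = UNIV"
  unfolding N_def gaussian_def by simp

lemma gauss_distr:
  assumes "s > 0"
  shows "distr N borel (\<lambda>z. m + s*z) = gaussian m s"
proof -
  interpret prob_space N by (rule prob_N)
  have d: "distributed N lborel (\<lambda>z. z) (normal_density 0 1)"
    unfolding distributed_def N_def gaussian_def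
    by (auto simp: distr_id2)
  have "distributed N lborel (\<lambda>z. m + s * z) (normal_density (m + s*0) (\<bar>s\<bar>*1))"
    by (rule normal_density_affine[OF d]) (use assms in auto)
  then have "distr N lborel (\<lambda>z. m + s * z) = gaussian m s"
    using assms unfolding gaussian_def by (simp add: distributed_distr_eq_density)
  moreover have "distr N borel (\<lambda>z. m + s*z) = distr N lborel (\<lambda>z. m + s*z)"
    by (rule distr_cong) auto
  ultimately show ?thesis by simp
qed

lemma gauss_neg: "distr N borel (\<lambda>z. - z) = N"
proof -
  interpret prob_space N by (rule prob_N)
  have d: "distributed N lborel (\<lambda>z. z) (normal_density 0 1)"
    unfolding distributed_def N_def gaussian_def
    by (auto simp: distr_id2)
  have "distributed N lborel (\<lambda>z. 0 + (-1) * z) (normal_density (0 + (-1)*0) (\<bar>-1\<bar>*1))"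
    by (rule normal_density_affine[OF d]) auto
  then have "distr N lborel (\<lambda>z. - z) = N"
    unfolding N_def gaussian_def by (simp add: distributed_distr_eq_density)
  moreover have "distr N borel (\<lambda>z. - z) = distr N lborel (\<lambda>z. - z)"
    by (rule distr_cong) auto
  ultimately show ?thesis by simp
qed


lemma N_dens: "N = density lborel (\<lambda>x. ennreal (std_normal_density x))"
  unfolding N_def gaussian_def by simp

lemma int_N_iff: "f \<in> borel_measurable borel \<Longrightarrow>
   integrable N f \<longleftrightarrow> integrable lborel (\<lambda>x. std_normal_density x * f x)"
  unfolding N_dens by (subst integrable_real_density) auto

lemma integral_N: "f \<in> borel_measurable borel \<Longrightarrow>
   integral\<^sup>L N f = (\<integral>x. std_normal_density x * f x \<partial>lborel)"
  unfolding N_dens by (subst integral_real_density) auto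

lemma int_abs: "integrable N (\<lambda>z. \<bar>z\<bar>)"
  using integrable_std_normal_moment_abs[of 1] by (subst int_N_iff) auto

lemma E_abs: "(\<integral>z. \<bar>z\<bar> \<partial>N) = sqrt (2/pi)"
  using integral_std_normal_moment_abs_odd[of 0] by (subst integral_N) auto

lemma int_id: "integrable N (\<lambda>z. z)"
  using integrable_std_normal_moment[of 1] by (subst int_N_iff) auto

lemma E_id: "(\<integral>z. z \<partial>N) = 0"
  using integral_std_normal_moment_odd[of 0] by (subst integral_N) auto

lemma int_sq: "integrable N (\<lambda>z. z^2)"
  using integrable_std_normal_moment[of 2] by (subst int_N_iff) auto

lemma E_sq: "(\<integral>z. z^2 \<partial>N) = 1"
  using integral_std_normal_moment_even[of 1] by (subst integral_N) auto

lemma int_const: "integrable N (\<lambda>z. c::real)"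
proof -
  interpret prob_space N by (rule prob_N)
  show ?thesis by simp
qed

lemma int_affine_abs: "integrable N (\<lambda>z. A + B * \<bar>z\<bar>)"
  by (rule Bochner_Integration.integrable_add[OF int_const integrable_mult_right[OF int_abs]])

lemma int_bounded:
  assumes [measurable]: "f \<in> borel_measurable borel" and "\<And>z. \<bar>f z\<bar> \<le> A + B * \<bar>z\<bar>"
  shows "integrable N f"
  by (rule Bochner_Integration.integrable_bound[OF int_affine_abs[of A B]])
     (use assms in \<open>auto intro: order_trans[OF _ abs_ge_self]\<close>)

definition h :: "real \<Rightarrow> real \<Rightarrow> real" where "h m s = (\<integral>z. \<bar>m + s*z\<bar> \<partial>N)"

lemma int_h: "integrable N (\<lambda>z. \<bar>m + s*z\<bar>)"
  apply (rule int_bounded[where A="\<bar>m\<bar>" and B="\<bar>s\<bar>"])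
   apply simp
  subgoal for z using abs_triangle_ineq[of m "s*z"] by (simp add: abs_mult)
  done

lemma h_nonneg: "h m s \<ge> 0"
  unfolding h_def by simp

lemma gauss_integrable:
  fixes f :: "real \<Rightarrow> real"
  assumes "s > 0" "f \<in> borel_measurable borel"
  shows "integrable (gaussian m s) f \<longleftrightarrow> integrable N (\<lambda>z. f (m + s*z))"
  unfolding gauss_distr[OF assms(1), symmetric]
  using integrable_distr_eq[of "\<lambda>z. m+s*z" N borel f] assms by simp

lemma gauss_integral:
  fixes f :: "real \<Rightarrow> real"
  assumes "s > 0" "f \<in> borel_measurable borel"
  shows "integral\<^sup>L (gaussian m s) f = (\<integral>z. f (m + s*z) \<partial>N)"
  unfolding gauss_distr[OF assms(1), symmetric]
  using integral_distr[of "\<lambda>z. m+s*z" N borel f] assms by simp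

lemma N_sym: "(\<integral>z. f (-z) \<partial>N) = integral\<^sup>L N f" if "(f::real\<Rightarrow>real) \<in> borel_measurable borel"
proof -
  have "integral\<^sup>L (distr N borel (\<lambda>z. -z)) f = (\<integral>z. f (-z) \<partial>N)"
    by (rule integral_distr) (use that in auto)
  then show ?thesis using gauss_neg by simp
qed


lemma phi_exists:
  fixes m1 m2 s1 s2 :: real
  assumes "s1 > 0" "s2 > 0"
  shows "\<exists>\<phi> A. \<phi> \<in> borel_measurable borel \<and> (\<forall>x y. \<phi> x - \<phi> y \<le> \<bar>x - y\<bar>)
     \<and> (\<forall>z. \<phi> (m1 + s1*z) - \<phi> (m2 + s2*z) = \<bar>(m1-m2) + (s1-s2)*z\<bar>) \<and> (\<forall>x. \<bar>\<phi> x\<bar> \<le> A + \<bar>x\<bar>)"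
proof (cases "s1 = s2")
  case True
  define c where "c = sgn (m1 - m2)"
  have c: "\<bar>c\<bar> \<le> 1" "c * (m1 - m2) = \<bar>m1 - m2\<bar>" unfolding c_def by (auto simp: sgn_if)
  show ?thesis
  proof (intro exI[of _ "\<lambda>x. c * x"] exI[of _ 0] conjI allI)
    fix x y :: real
    have "c * x - c * y \<le> \<bar>c * (x - y)\<bar>" by (simp add: right_diff_distrib)
    also have "\<dots> \<le> \<bar>x - y\<bar>" using c by (simp add: abs_mult mult_left_le_one_le)
    finally show "c * x - c * y \<le> \<bar>x - y\<bar>" .
  next
    fix z show "c * (m1 + s1 * z) - c * (m2 + s2 * z) = \<bar>m1 - m2 + (s1 - s2) * z\<bar>"
      using True c by (simp add: algebra_simps)
  next
    fix x show "\<bar>c * x\<bar> \<le> 0 + \<bar>x\<bar>" using c by (simp add: abs_mult mult_left_le_one_le)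
  qed simp
next
  case False
  define d where "d = s1 - s2"
  have d: "d \<noteq> 0" using False d_def by simp
  define z0 where "z0 = - (m1 - m2) / d"
  define x0 where "x0 = m1 + s1 * z0"
  define c where "c = sgn d"
  have c: "\<bar>c\<bar> \<le> 1" "c * d = \<bar>d\<bar>" unfolding c_def by (auto simp: sgn_if)
  have e1: "m1 + s1 * z - x0 = s1 * (z - z0)" for z unfolding x0_def by (simp add: algebra_simps)
  have e2: "m2 + s2 * z - x0 = s2 * (z - z0)" for z
    unfolding x0_def z0_def d_def using d by (simp add: field_simps d_def)
  have e3: "m1 - m2 + d * z = d * (z - z0)" for z
    unfolding z0_def using d by (simp add: field_simps)
  show ?thesis
  proof (intro exI[of _ "\<lambda>x. c * \<bar>x - x0\<bar>"] exI[of _ "\<bar>x0\<bar>"] conjI allI)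
    fix x y :: real
    have "c * \<bar>x - x0\<bar> - c * \<bar>y - x0\<bar> \<le> \<bar>c * (\<bar>x - x0\<bar> - \<bar>y - x0\<bar>)\<bar>" by (simp add: right_diff_distrib)
    also have "\<dots> \<le> \<bar>\<bar>x - x0\<bar> - \<bar>y - x0\<bar>\<bar>" using c by (simp add: abs_mult mult_left_le_one_le)
    also have "\<dots> \<le> \<bar>x - y\<bar>" by linarith
    finally show "c * \<bar>x - x0\<bar> - c * \<bar>y - x0\<bar> \<le> \<bar>x - y\<bar>" .
  next
    fix z
    have "c * \<bar>m1 + s1 * z - x0\<bar> - c * \<bar>m2 + s2 * z - x0\<bar> = c * d * \<bar>z - z0\<bar>"
      unfolding e1 e2 d_def using assms by (simp add: abs_mult) (simp add: algebra_simps)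
    also have "\<dots> = \<bar>d * (z - z0)\<bar>" using c by (simp add: abs_mult)
    finally show "c * \<bar>m1 + s1 * z - x0\<bar> - c * \<bar>m2 + s2 * z - x0\<bar> = \<bar>m1 - m2 + (s1 - s2) * z\<bar>"
      using e3 d_def by simp
  next
    fix x
    have "\<bar>c * \<bar>x - x0\<bar>\<bar> \<le> \<bar>x - x0\<bar>" using c by (simp add: abs_mult mult_left_le_one_le)
    then show "\<bar>c * \<bar>x - x0\<bar>\<bar> \<le> \<bar>x0\<bar> + \<bar>x\<bar>" by linarith
  qed simp
qed




lemma lower:
  fixes m1 m2 s1 s2 :: real
  assumes s: "s1 > 0" "s2 > 0" and pi: "\<pi> \<in> couplings (gaussian m1 s1) (gaussian m2 s2)"
  shows "ennreal (h (m1-m2) (s1-s2)) \<le> (\<integral>\<^sup>+ z. ennreal \<bar>fst z - snd z\<bar> \<partial>\<pi>)"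
proof -
  obtain \<phi> A where phm[measurable]: "\<phi> \<in> borel_measurable borel"
    and lip: "\<And>x y. \<phi> x - \<phi> y \<le> \<bar>x - y\<bar>"
    and key: "\<And>z. \<phi> (m1 + s1*z) - \<phi> (m2 + s2*z) = \<bar>(m1-m2) + (s1-s2)*z\<bar>"
    and bd: "\<And>x. \<bar>\<phi> x\<bar> \<le> A + \<bar>x\<bar>"
    using phi_exists[OF s, of m1 m2] by blast
  have sp: "sets \<pi> = sets (borel \<Otimes>\<^sub>M borel)" and ps: "prob_space \<pi>"
    and d1: "distr \<pi> borel fst = gaussian m1 s1" and d2: "distr \<pi> borel snd = gaussian m2 s2"
    using pi unfolding couplings_def by auto
  have mf: "fst \<in> measurable \<pi> borel" and ms: "snd \<in> measurable \<pi> borel"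
    using measurable_cong_sets[OF sp refl] by auto
  have mm: "(\<lambda>z::real\<times>real. \<bar>fst z - snd z\<bar>) \<in> borel_measurable (borel \<Otimes>\<^sub>M borel)" by measurable
  have mabs: "(\<lambda>z. \<bar>fst z - snd z\<bar>) \<in> borel_measurable \<pi>"
    by (subst measurable_cong_sets[OF sp refl]) (rule mm)
  have gi: "integrable N (\<lambda>z. \<phi> (m + s*z))" if "s > 0" for m s :: real
  proof (rule int_bounded[where A="A + \<bar>m\<bar>" and B=s])
    fix z
    have "\<bar>\<phi> (m + s*z)\<bar> \<le> A + \<bar>m + s*z\<bar>" by (rule bd)
    also have "\<dots> \<le> A + \<bar>m\<bar> + s * \<bar>z\<bar>" using abs_triangle_ineq[of m "s*z"] that
      by (simp add: abs_mult)
    finally show "\<bar>\<phi> (m + s*z)\<bar> \<le> A + \<bar>m\<bar> + s * \<bar>z\<bar>" .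
  qed simp
  have i1: "integrable \<pi> (\<lambda>z. \<phi> (fst z))"
    using integrable_distr_eq[OF mf phm] d1 gauss_integrable[OF s(1) phm] gi[OF s(1)] by simp
  have i2: "integrable \<pi> (\<lambda>z. \<phi> (snd z))"
    using integrable_distr_eq[OF ms phm] d2 gauss_integrable[OF s(2) phm] gi[OF s(2)] by simp
  have e1: "(\<integral>z. \<phi> (fst z) \<partial>\<pi>) = (\<integral>z. \<phi> (m1 + s1*z) \<partial>N)"
    using integral_distr[OF mf phm] d1 gauss_integral[OF s(1) phm] by simp
  have e2: "(\<integral>z. \<phi> (snd z) \<partial>\<pi>) = (\<integral>z. \<phi> (m2 + s2*z) \<partial>N)"
    using integral_distr[OF ms phm] d2 gauss_integral[OF s(2) phm] by simp
  have eh: "(\<integral>z. \<phi> (fst z) - \<phi> (snd z) \<partial>\<pi>) = h (m1-m2) (s1-s2)"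
  proof -
    have "(\<integral>z. \<phi> (fst z) - \<phi> (snd z) \<partial>\<pi>) = (\<integral>z. \<phi> (m1 + s1*z) \<partial>N) - (\<integral>z. \<phi> (m2 + s2*z) \<partial>N)"
      using Bochner_Integration.integral_diff[OF i1 i2] e1 e2 by simp
    also have "\<dots> = (\<integral>z. \<phi> (m1 + s1*z) - \<phi> (m2 + s2*z) \<partial>N)"
      using Bochner_Integration.integral_diff[OF gi[OF s(1)] gi[OF s(2)]] by simp
    also have "\<dots> = h (m1-m2) (s1-s2)" unfolding h_def key ..
    finally show ?thesis .
  qed
  show ?thesis
  proof (cases "(\<integral>\<^sup>+ z. ennreal \<bar>fst z - snd z\<bar> \<partial>\<pi>) = \<infinity>")
    case True then show ?thesis by simp
  next
    case False
    have ia: "integrable \<pi> (\<lambda>z. \<bar>fst z - snd z\<bar>)"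
      by (rule integrableI_bounded) (use mabs False in \<open>auto simp: less_top\<close>)
    have "(\<integral>\<^sup>+ z. ennreal \<bar>fst z - snd z\<bar> \<partial>\<pi>) = ennreal (\<integral>z. \<bar>fst z - snd z\<bar> \<partial>\<pi>)"
      by (rule nn_integral_eq_integral[OF ia]) simp
    moreover have "h (m1-m2) (s1-s2) \<le> (\<integral>z. \<bar>fst z - snd z\<bar> \<partial>\<pi>)"
      unfolding eh[symmetric]
      by (rule integral_mono[OF Bochner_Integration.integrable_diff[OF i1 i2] ia]) (rule lip)
    ultimately show ?thesis by (simp add: ennreal_leI)
  qed
qed



lemma W_gauss:
  fixes m1 m2 s1 s2 :: real
  assumes s: "s1 > 0" "s2 > 0"
  shows "wasserstein1 (gaussian m1 s1) (gaussian m2 s2) = h (m1-m2) (s1-s2)"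
proof -
  interpret N: prob_space N by (rule prob_N)
  define f where "f = (\<lambda>z::real. (m1 + s1*z, m2 + s2*z))"
  have fm[measurable]: "f \<in> measurable N (borel \<Otimes>\<^sub>M borel)"
    unfolding f_def by measurable
  define \<pi>0 where "\<pi>0 = distr N (borel \<Otimes>\<^sub>M borel) f"
  have "\<pi>0 \<in> couplings (gaussian m1 s1) (gaussian m2 s2)"
    unfolding couplings_def
  proof (intro CollectI conjI)
    show "sets \<pi>0 = sets (borel \<Otimes>\<^sub>M borel)" unfolding \<pi>0_def by simp
    show "prob_space \<pi>0" unfolding \<pi>0_def by (rule N.prob_space_distr[OF fm])
    have "distr \<pi>0 borel fst = distr N borel (fst \<circ> f)" unfolding \<pi>0_def
      by (rule distr_distr) (use fm in auto)
    also have "\<dots> = gaussian m1 s1" using gauss_distr[OF s(1)] by (simp add: f_def comp_def)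
    finally show "distr \<pi>0 borel fst = gaussian m1 s1" .
    have "distr \<pi>0 borel snd = distr N borel (snd \<circ> f)" unfolding \<pi>0_def
      by (rule distr_distr) (use fm in auto)
    also have "\<dots> = gaussian m2 s2" using gauss_distr[OF s(2)] by (simp add: f_def comp_def)
    finally show "distr \<pi>0 borel snd = gaussian m2 s2" .
  qed
  then have le0: "(INF \<pi> \<in> couplings (gaussian m1 s1) (gaussian m2 s2). \<integral>\<^sup>+ z. ennreal \<bar>fst z - snd z\<bar> \<partial>\<pi>)
      \<le> (\<integral>\<^sup>+ z. ennreal \<bar>fst z - snd z\<bar> \<partial>\<pi>0)" by (rule INF_lower)
  have eq0: "(\<integral>\<^sup>+ z. ennreal \<bar>fst z - snd z\<bar> \<partial>\<pi>0) = ennreal (h (m1-m2) (s1-s2))"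
  proof -
    have "(\<integral>\<^sup>+ z. ennreal \<bar>fst z - snd z\<bar> \<partial>\<pi>0) = (\<integral>\<^sup>+ z. ennreal \<bar>fst (f z) - snd (f z)\<bar> \<partial>N)"
      unfolding \<pi>0_def by (rule nn_integral_distr) (use fm in auto)
    also have "\<dots> = (\<integral>\<^sup>+ z. ennreal \<bar>(m1-m2) + (s1-s2)*z\<bar> \<partial>N)"
      by (simp add: f_def algebra_simps)
    also have "\<dots> = ennreal (h (m1-m2) (s1-s2))"
      unfolding h_def by (rule nn_integral_eq_integral[OF int_h]) simp
    finally show ?thesis .
  qed
  have le: "(INF \<pi> \<in> couplings (gaussian m1 s1) (gaussian m2 s2). \<integral>\<^sup>+ z. ennreal \<bar>fst z - snd z\<bar> \<partial>\<pi>)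
      \<le> ennreal (h (m1-m2) (s1-s2))"
    using le0 eq0 by simp
  have ge: "ennreal (h (m1-m2) (s1-s2)) \<le> (INF \<pi> \<in> couplings (gaussian m1 s1) (gaussian m2 s2). \<integral>\<^sup>+ z. ennreal \<bar>fst z - snd z\<bar> \<partial>\<pi>)"
    by (rule INF_greatest) (rule lower[OF s])
  show ?thesis unfolding wasserstein1_def using antisym[OF le ge] h_nonneg by simp
qed



lemma gaussW_h: "gaussW m s = h m s"
proof -
  have "gaussW m s = h (m - 0) ((1 + \<bar>s\<bar> + s) - (1 + \<bar>s\<bar>))"
    unfolding gaussW_def by (rule W_gauss) auto
  then show ?thesis by simp
qed

lemma measure_N_UNIV: "measure N UNIV = 1"
proof -
  interpret prob_space N by (rule prob_N)
  show ?thesis using prob_space by simp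
qed

lemma E_const: "(\<integral>z. c \<partial>N) = (c::real)"
  by (simp add: measure_N_UNIV)

lemma tri1: "\<bar>m + a\<bar> - \<bar>m\<bar> \<le> \<bar>a\<bar>" "- \<bar>a\<bar> \<le> \<bar>m + a\<bar> - \<bar>m\<bar>"
  "\<bar>m + a\<bar> - \<bar>a\<bar> \<le> \<bar>m\<bar>" "- \<bar>m\<bar> \<le> \<bar>m + a\<bar> - \<bar>a\<bar>" for m a :: real
  by arith+

lemma int_abs_s: "integrable N (\<lambda>z. \<bar>s * z\<bar>)"
  using int_h[of 0 s] by simp

lemma E_abs_s: "(\<integral>z. \<bar>s * z\<bar> \<partial>N) = \<bar>s\<bar> * sqrt (2/pi)"
  using E_abs by (simp add: abs_mult)

lemma bound_i: "\<bar>h m s - \<bar>m\<bar>\<bar> \<le> \<bar>s\<bar> * sqrt (2/pi)"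
proof -
  have eq: "h m s - \<bar>m\<bar> = (\<integral>z. \<bar>m + s*z\<bar> - \<bar>m\<bar> \<partial>N)"
    unfolding h_def using Bochner_Integration.integral_diff[OF int_h int_const, of m s "\<bar>m\<bar>"] E_const by simp
  have "(\<integral>z. \<bar>m + s*z\<bar> - \<bar>m\<bar> \<partial>N) \<le> (\<integral>z. \<bar>s * z\<bar> \<partial>N)"
    by (rule integral_mono[OF Bochner_Integration.integrable_diff[OF int_h int_const] int_abs_s])
       (rule tri1)
  moreover have "- (\<integral>z. \<bar>s * z\<bar> \<partial>N) \<le> (\<integral>z. \<bar>m + s*z\<bar> - \<bar>m\<bar> \<partial>N)"
  proof -
    have "(\<integral>z. - \<bar>s * z\<bar> \<partial>N) \<le> (\<integral>z. \<bar>m + s*z\<bar> - \<bar>m\<bar> \<partial>N)"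
      by (rule integral_mono[OF integrable_minus[OF int_abs_s] Bochner_Integration.integrable_diff[OF int_h int_const]])
         (use tri1 in simp)
    then show ?thesis by simp
  qed
  ultimately show ?thesis unfolding abs_le_iff using eq E_abs_s[of s] by linarith
qed

lemma bound_iv: "\<bar>h m s - \<bar>s\<bar> * sqrt (2/pi)\<bar> \<le> \<bar>m\<bar>"
proof -
  have eq: "h m s - \<bar>s\<bar> * sqrt (2/pi) = (\<integral>z. \<bar>m + s*z\<bar> - \<bar>s*z\<bar> \<partial>N)"
    unfolding h_def E_abs_s[symmetric] using Bochner_Integration.integral_diff[OF int_h int_abs_s, of m s s] by simp
  have "(\<integral>z. \<bar>m + s*z\<bar> - \<bar>s*z\<bar> \<partial>N) \<le> (\<integral>z. \<bar>m\<bar> \<partial>N)"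
    by (rule integral_mono[OF Bochner_Integration.integrable_diff[OF int_h int_abs_s] int_const])
       (rule tri1)
  moreover have "(\<integral>z. - \<bar>m\<bar> \<partial>N) \<le> (\<integral>z. \<bar>m + s*z\<bar> - \<bar>s*z\<bar> \<partial>N)"
    by (rule integral_mono[OF int_const Bochner_Integration.integrable_diff[OF int_h int_abs_s]])
       (use tri1 in simp)
  ultimately show ?thesis unfolding abs_le_iff using eq E_const[of "\<bar>m\<bar>"] E_const[of "-\<bar>m\<bar>"] by linarith
qed

lemma pw_ii: "m \<noteq> 0 \<Longrightarrow> 0 \<le> \<bar>m + x\<bar> - \<bar>m\<bar> - sgn m * x \<and> \<bar>m + x\<bar> - \<bar>m\<bar> - sgn m * x \<le> x^2 / (2*\<bar>m\<bar>)"
  for m x :: real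
proof -
  assume m: "m \<noteq> 0"
  have a: "\<bar>m + x\<bar> - \<bar>m\<bar> - sgn m * x \<le> 2 * max 0 (\<bar>x\<bar> - \<bar>m\<bar>)"
    using m by (cases "m > 0") (auto simp: sgn_if abs_if)
  have b: "2 * max 0 (\<bar>x\<bar> - \<bar>m\<bar>) * (2*\<bar>m\<bar>) \<le> x^2"
  proof (cases "\<bar>x\<bar> \<le> \<bar>m\<bar>")
    case True then show ?thesis by simp
  next
    case False
    have sq: "0 \<le> (\<bar>x\<bar> - 2*\<bar>m\<bar>)^2" by simp
    have e1: "(\<bar>x\<bar> - 2*\<bar>m\<bar>)^2 = x^2 - 4*(\<bar>m\<bar>*\<bar>x\<bar>) + 4*(\<bar>m\<bar>*\<bar>m\<bar>)"
      by (simp add: power2_eq_square algebra_simps)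
    have e2: "2 * max 0 (\<bar>x\<bar> - \<bar>m\<bar>) * (2*\<bar>m\<bar>) = 4*(\<bar>m\<bar>*\<bar>x\<bar>) - 4*(\<bar>m\<bar>*\<bar>m\<bar>)"
      using False by (simp add: algebra_simps)
    show ?thesis using sq e1 e2 by linarith
  qed
  have mp: "0 < 2*\<bar>m\<bar>" using m by simp
  have "2 * max 0 (\<bar>x\<bar> - \<bar>m\<bar>) \<le> x^2 / (2*\<bar>m\<bar>)"
    using b mp by (simp add: pos_le_divide_eq)
  then have "\<bar>m + x\<bar> - \<bar>m\<bar> - sgn m * x \<le> x^2 / (2*\<bar>m\<bar>)"
    using a by linarith
  moreover have "0 \<le> \<bar>m + x\<bar> - \<bar>m\<bar> - sgn m * x"
    using m by (cases "m > 0") (auto simp: sgn_if abs_if)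
  ultimately show ?thesis by simp
qed

lemma pw_iii: "0 \<le> \<bar>m + a\<bar> + \<bar>m - a\<bar> - 2*\<bar>a\<bar> \<and> \<bar>m + a\<bar> + \<bar>m - a\<bar> - 2*\<bar>a\<bar> \<le> (if \<bar>a\<bar> \<le> \<bar>m\<bar> then 2*\<bar>m\<bar> else 0)"
  for m a :: real
  by (auto simp: abs_if)

lemma bound_ii:
  assumes m: "m \<noteq> 0"
  shows "\<bar>h m s - \<bar>m\<bar>\<bar> \<le> s^2 / (2*\<bar>m\<bar>)"
proof -
  define g where "g z = \<bar>m + s*z\<bar> - \<bar>m\<bar> - sgn m * s * z" for z
  have ig: "integrable N g" unfolding g_def
    by (intro Bochner_Integration.integrable_diff int_h int_const integrable_mult_right int_id)
  have Eg: "integral\<^sup>L N g = h m s - \<bar>m\<bar>"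
    unfolding g_def h_def
    by (subst Bochner_Integration.integral_diff, (intro Bochner_Integration.integrable_diff int_h int_const integrable_mult_right int_id)+,
        subst Bochner_Integration.integral_diff, (intro int_h int_const)+) (simp add: E_const E_id mult.assoc measure_N_UNIV)
  have isq: "integrable N (\<lambda>z. (s^2 / (2*\<bar>m\<bar>)) * z^2)" by (intro integrable_mult_right int_sq)
  have "integral\<^sup>L N g \<le> (\<integral>z. (s^2 / (2*\<bar>m\<bar>)) * z^2 \<partial>N)"
  proof (rule integral_mono[OF ig isq])
    fix z
    have "g z \<le> (s*z)^2 / (2*\<bar>m\<bar>)" using pw_ii[OF m, of "s*z"] unfolding g_def by (simp add: mult.assoc)
    then show "g z \<le> (s^2 / (2*\<bar>m\<bar>)) * z^2" by (simp add: power_mult_distrib)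
  qed
  also have "\<dots> = s^2 / (2*\<bar>m\<bar>)" using E_sq by simp
  finally have up: "integral\<^sup>L N g \<le> s^2 / (2*\<bar>m\<bar>)" .
  have "0 \<le> integral\<^sup>L N g"
    by (rule integral_nonneg_AE) (use pw_ii[OF m] in \<open>auto simp: g_def mult.assoc\<close>)
  then show ?thesis using up Eg by simp
qed

lemma measure_N_le: "r \<ge> 0 \<Longrightarrow> measure N {-r..r} \<le> 2*r"
proof -
  assume r: "r \<ge> 0"
  interpret prob_space N by (rule prob_N)
  have d1: "std_normal_density x \<le> 1" for x
  proof -
    have "exp (- x\<^sup>2 / 2) \<le> 1" by simp
    moreover have "1 / sqrt (2 * pi) \<le> 1" using pi_gt3 by (simp add: divide_le_eq)
    ultimately show ?thesis unfolding std_normal_density_def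
      by (metis mult_le_one zero_le_divide_1_iff exp_ge_zero real_sqrt_ge_zero pi_ge_zero mult_nonneg_nonneg zero_le_numeral)
  qed
  have "emeasure N {-r..r} = (\<integral>\<^sup>+ x. ennreal (std_normal_density x) * indicator {-r..r} x \<partial>lborel)"
    unfolding N_dens by (subst emeasure_density) auto
  also have "\<dots> \<le> (\<integral>\<^sup>+ x. indicator {-r..r} x \<partial>lborel)"
    by (intro nn_integral_mono) (auto simp: d1 split: split_indicator)
  also have "\<dots> = ennreal (2*r)" using r by simp
  finally have "ennreal (measure N {-r..r}) \<le> ennreal (2*r)" by (simp add: emeasure_eq_measure)
  then show ?thesis using r by (simp add: ennreal_le_iff)
qed

lemma h_sym: "h m s = (\<integral>z. \<bar>m - s*z\<bar> \<partial>N)"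
  unfolding h_def using N_sym[of "\<lambda>z. \<bar>m + s*z\<bar>"] by simp

lemma bound_iii:
  assumes s: "s \<noteq> 0"
  shows "\<bar>h m s - \<bar>s\<bar> * sqrt (2/pi)\<bar> \<le> 2 * m^2 / \<bar>s\<bar>"
proof -
  define r where "r = \<bar>m\<bar> / \<bar>s\<bar>"
  have r0: "r \<ge> 0" unfolding r_def by simp
  define g where "g z = \<bar>m + s*z\<bar> + \<bar>m - s*z\<bar> - 2 * \<bar>s*z\<bar>" for z
  have ig: "integrable N g" unfolding g_def
    by (intro Bochner_Integration.integrable_diff Bochner_Integration.integrable_add int_h integrable_mult_right int_abs_s)
       (use int_h[of m "-s"] in simp)
  have Eg: "integral\<^sup>L N g = 2 * (h m s - \<bar>s\<bar> * sqrt (2/pi))"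
  proof -
    have i2: "integrable N (\<lambda>z. \<bar>m - s*z\<bar>)" using int_h[of m "-s"] by simp
    have "integral\<^sup>L N g = h m s + h m s - 2 * (\<bar>s\<bar> * sqrt (2/pi))"
      unfolding g_def
      apply (subst Bochner_Integration.integral_diff)
        apply (intro Bochner_Integration.integrable_add int_h i2)
       apply (intro integrable_mult_right int_abs_s)
      apply (subst Bochner_Integration.integral_add[OF int_h i2])
      apply (simp add: h_def[symmetric] h_sym[symmetric] E_abs_s)
      done
    then show ?thesis by simp
  qed
  have ind: "(if \<bar>s*z\<bar> \<le> \<bar>m\<bar> then 2*\<bar>m\<bar> else 0) = 2*\<bar>m\<bar> * indicator {-r..r} z" for z
  proof -
    have "\<bar>s*z\<bar> \<le> \<bar>m\<bar> \<longleftrightarrow> \<bar>z\<bar> \<le> r" unfolding r_def using s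
      by (simp add: abs_mult pos_le_divide_eq mult.commute)
    then show ?thesis by (auto simp: indicator_def abs_le_iff)
  qed
  have iI: "integrable N (\<lambda>z. 2*\<bar>m\<bar> * indicator {-r..r} z)"
  proof -
    interpret prob_space N by (rule prob_N)
    show ?thesis by (intro integrable_mult_right integrable_real_indicator) (auto simp: emeasure_eq_measure)
  qed
  have "integral\<^sup>L N g \<le> (\<integral>z. 2*\<bar>m\<bar> * indicator {-r..r} z \<partial>N)"
  proof (rule integral_mono[OF ig iI])
    fix z
    have "g z \<le> (if \<bar>s*z\<bar> \<le> \<bar>m\<bar> then 2*\<bar>m\<bar> else 0)"
      using pw_iii[of m "s*z"] unfolding g_def by linarith
    then show "g z \<le> 2*\<bar>m\<bar> * indicator {-r..r} z" using ind[of z] by simp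
  qed
  also have "\<dots> = 2*\<bar>m\<bar> * measure N {-r..r}" by simp
  also have "\<dots> \<le> 2*\<bar>m\<bar> * (2*r)" by (intro mult_left_mono measure_N_le r0) simp
  also have "\<dots> = 4 * m^2 / \<bar>s\<bar>" unfolding r_def by (simp add: power2_eq_square)
  finally have up: "integral\<^sup>L N g \<le> 4 * m^2 / \<bar>s\<bar>" .
  have "0 \<le> integral\<^sup>L N g"
    by (rule integral_nonneg_AE) (use pw_iii in \<open>auto simp: g_def\<close>)
  then show ?thesis using up Eg by simp
qed


lemma lim_inv: "((\<lambda>x. c / \<bar>x\<bar>) \<longlongrightarrow> (0::real)) F" if "filterlim (\<lambda>x::real. \<bar>x\<bar>) at_top F"
  by (rule tendsto_divide_0[OF tendsto_const filterlim_at_top_imp_at_infinity[OF that]])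

lemma abs_at_bot: "filterlim (\<lambda>x::real. \<bar>x\<bar>) at_top at_bot"
  using filterlim_compose[OF filterlim_abs_real filterlim_uminus_at_top_at_bot] by simp

lemma lim_ii: "((\<lambda>m. h m s - \<bar>m\<bar>) \<longlongrightarrow> 0) F"
  if "filterlim (\<lambda>x::real. \<bar>x\<bar>) at_top F" "eventually (\<lambda>m. m \<noteq> 0) F"
proof (rule Lim_null_comparison)
  show "\<forall>\<^sub>F m in F. norm (h m s - \<bar>m\<bar>) \<le> (s^2/2) / \<bar>m\<bar>"
    using that(2) by eventually_elim (use bound_ii in simp)
  show "((\<lambda>m. (s^2/2) / \<bar>m\<bar>) \<longlongrightarrow> 0) F" by (rule lim_inv[OF that(1)])
qed

lemma lim_iii: "((\<lambda>s. h m s - sqrt (2/pi) * \<bar>s\<bar>) \<longlongrightarrow> 0) F"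
  if "filterlim (\<lambda>x::real. \<bar>x\<bar>) at_top F" "eventually (\<lambda>s. s \<noteq> 0) F"
proof (rule Lim_null_comparison)
  show "\<forall>\<^sub>F s in F. norm (h m s - sqrt (2/pi) * \<bar>s\<bar>) \<le> (2 * m^2) / \<bar>s\<bar>"
    using that(2) by eventually_elim (use bound_iii in \<open>simp add: mult.commute\<close>)
  show "((\<lambda>s. (2 * m^2) / \<bar>s\<bar>) \<longlongrightarrow> 0) F" by (rule lim_inv[OF that(1)])
qed

theorem proposition1:
  shows "(\<forall>mu1 mu2 s1 s2 :: real. s1 > 0 \<and> s2 > 0 \<longrightarrow>
            wasserstein1 (gaussian mu1 s1) (gaussian mu2 s2) = gaussW (mu1 - mu2) (s1 - s2))
       \<and> (\<forall>my. ((\<lambda>sy. gaussW my sy) \<longlongrightarrow> \<bar>my\<bar>) (at 0))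
       \<and> (\<forall>sy. ((\<lambda>my. gaussW my sy - \<bar>my\<bar>) \<longlongrightarrow> 0) at_top
              \<and> ((\<lambda>my. gaussW my sy - \<bar>my\<bar>) \<longlongrightarrow> 0) at_bot)
       \<and> (\<forall>my. ((\<lambda>sy. gaussW my sy - sqrt (2 / pi) * \<bar>sy\<bar>) \<longlongrightarrow> 0) at_top
              \<and> ((\<lambda>sy. gaussW my sy - sqrt (2 / pi) * \<bar>sy\<bar>) \<longlongrightarrow> 0) at_bot)
       \<and> (\<forall>sy. sy \<noteq> 0 \<longrightarrow> ((\<lambda>my. gaussW my sy) \<longlongrightarrow> sqrt (2 / pi) * \<bar>sy\<bar>) (at 0))"
  unfolding gaussW_h
proof (intro conjI allI impI)
  fix mu1 mu2 s1 s2 :: real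
  assume "s1 > 0 \<and> s2 > 0"
  then show "wasserstein1 (gaussian mu1 s1) (gaussian mu2 s2) = h (mu1 - mu2) (s1 - s2)"
    using W_gauss by blast
next
  fix my :: real
  show "((\<lambda>sy. h my sy) \<longlongrightarrow> \<bar>my\<bar>) (at 0)"
  proof (rule LIM_zero_cancel, rule Lim_null_comparison)
    show "\<forall>\<^sub>F s in at 0. norm (h my s - \<bar>my\<bar>) \<le> \<bar>s\<bar> * sqrt (2/pi)"
      using bound_i by simp
    have "((\<lambda>s::real. \<bar>s\<bar> * sqrt (2/pi)) \<longlongrightarrow> \<bar>0\<bar> * sqrt (2/pi)) (at 0)"
      by (intro tendsto_intros)
    then show "((\<lambda>s::real. \<bar>s\<bar> * sqrt (2/pi)) \<longlongrightarrow> 0) (at 0)" by simp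
  qed
next
  fix sy :: real
  show "((\<lambda>my. h my sy - \<bar>my\<bar>) \<longlongrightarrow> 0) at_top"
    by (rule lim_ii[OF filterlim_abs_real]) (use eventually_gt_at_top[of 0] in \<open>auto elim: eventually_mono\<close>)
  show "((\<lambda>my. h my sy - \<bar>my\<bar>) \<longlongrightarrow> 0) at_bot"
    by (rule lim_ii[OF abs_at_bot]) simp
next
  fix my :: real
  show "((\<lambda>sy. h my sy - sqrt (2/pi) * \<bar>sy\<bar>) \<longlongrightarrow> 0) at_top"
    by (rule lim_iii[OF filterlim_abs_real]) (use eventually_gt_at_top[of 0] in \<open>auto elim: eventually_mono\<close>)
  show "((\<lambda>sy. h my sy - sqrt (2/pi) * \<bar>sy\<bar>) \<longlongrightarrow> 0) at_bot"
    by (rule lim_iii[OF abs_at_bot]) simp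
next
  fix sy :: real
  assume "sy \<noteq> 0"
  show "((\<lambda>my. h my sy) \<longlongrightarrow> sqrt (2/pi) * \<bar>sy\<bar>) (at 0)"
  proof (rule LIM_zero_cancel, rule Lim_null_comparison)
    show "\<forall>\<^sub>F m in at 0. norm (h m sy - sqrt (2/pi) * \<bar>sy\<bar>) \<le> \<bar>m\<bar>"
      using bound_iv by (simp add: mult.commute)
    have "((\<lambda>m::real. \<bar>m\<bar>) \<longlongrightarrow> \<bar>0\<bar>) (at 0)"
      by (intro tendsto_intros)
    then show "((\<lambda>m::real. \<bar>m\<bar>) \<longlongrightarrow> 0) (at 0)" by simp
  qed
qed

end
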